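(* Let $V$ be a real vector space with inner products $\langle\cdot,\cdot\rangle_1,\langle\cdot,\cdot\rangle_2$ and induced norms $\|\cdot\|_1,\|\cdot\|_2$. Suppose at least one of the following holds: (1) $\langle\cdot,\cdot\rangle_2=c\langle\cdot,\cdot\rangle_1$ for some $c>0$; (2) $\|\cdot\|_2=c\|\cdot\|_1$ for some $c>0$; (3) the two inner products give the same angle between every pair of nonzero vectors; (4) for all nonzero $x,y$, $\langle x,y\rangle_1=0\iff\langle x,y\rangle_2=0$; (5) for some $\theta_0\in(0,\pi)$, for all nonzero $x,y$ the angle between $x,y$ with respect to $\langle\cdot,\cdot\rangle_1$ is $\theta_0$ iff it is $\theta_0$ with respect to $\langle\cdot,\cdot\rangle_2$. If moreover there is a nonzero $x\in V$ with $\|x\|_1=\|x\|_2$, then $\langle\cdot,\cdot\rangle_1=\langle\cdot,\cdot\rangle_2$.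
   Context: For an inner product $\langle\cdot,\cdot\rangle$ on a real vector space with norm $\|x\|=\sqrt{\langle x,x\rangle}$, the angle between nonzero vectors $x,y$ is the unique $\theta\in[0,\pi]$ with $\cos\theta=\langle x,y\rangle/(\|x\|\|y\|)$. *)

theory Defs
  imports Complex_Main
begin

definition is_inner_product :: "('a::real_vector \<Rightarrow> 'a \<Rightarrow> real) \<Rightarrow> bool" where
  "is_inner_product ip \<longleftrightarrow>
     (\<forall>x y. ip x y = ip y x) \<and>
     (\<forall>x y z. ip (x + y) z = ip x z + ip y z) \<and>
     (\<forall>r x y. ip (r *\<^sub>R x) y = r * ip x y) \<and>
     (\<forall>x. x \<noteq> 0 \<longrightarrow> ip x x > 0)"

definition ip_norm :: "('a \<Rightarrow> 'a \<Rightarrow> real) \<Rightarrow> 'a \<Rightarrow> real" where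
  "ip_norm ip x = sqrt (ip x x)"

definition ip_angle :: "('a \<Rightarrow> 'a \<Rightarrow> real) \<Rightarrow> 'a \<Rightarrow> 'a \<Rightarrow> real" where
  "ip_angle ip x y = arccos (ip x y / (ip_norm ip x * ip_norm ip y))"

end

theory Submission
  imports Defs
begin

locale ipl =
  fixes ip :: "'a::real_vector \<Rightarrow> 'a \<Rightarrow> real"
  assumes isip: "is_inner_product ip"
begin

lemma sym: "ip x y = ip y x" using isip unfolding is_inner_product_def by blast
lemma addl[simp]: "ip (x + y) z = ip x z + ip y z" using isip unfolding is_inner_product_def by blast
lemma scalel[simp]: "ip (r *\<^sub>R x) y = r * ip x y" using isip unfolding is_inner_product_def by blast
lemma addr[simp]: "ip z (x + y) = ip z x + ip z y" using addl sym by metis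
lemma scaler[simp]: "ip y (r *\<^sub>R x) = r * ip y x" using scalel sym by metis
lemma zerol[simp]: "ip 0 y = 0" using scalel[of 0 y y] by simp
lemma zeror[simp]: "ip y 0 = 0" using zerol sym by metis
lemma minusl[simp]: "ip (- x) y = - ip x y" using scalel[of "-1" x y] by simp
lemma minusr[simp]: "ip y (- x) = - ip y x" using scaler[of y "-1" x] by simp
lemma diffl[simp]: "ip (x - y) z = ip x z - ip y z" using addl[of x "-y" z] minusl[of y z] by simp
lemma diffr[simp]: "ip z (x - y) = ip z x - ip z y" using addr[of z x "-y"] minusr[of z y] by simp
lemma pos: "x \<noteq> 0 \<Longrightarrow> ip x x > 0" using isip unfolding is_inner_product_def by blast
lemma nonneg: "ip x x \<ge> 0" by (cases "x = 0") (auto dest: pos)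

lemma nsq: "(ip_norm ip x)^2 = ip x x" unfolding ip_norm_def using nonneg by simp
lemma npos: "x \<noteq> 0 \<Longrightarrow> ip_norm ip x > 0" unfolding ip_norm_def using pos by simp

lemma cs_sq: "(ip x y)^2 \<le> ip x x * ip y y"
proof (cases "y = 0")
  case False
  define l where "l = ip x y / ip y y"
  have yp: "ip y y > 0" using pos False by simp
  have "0 \<le> ip (x - l *\<^sub>R y) (x - l *\<^sub>R y)" by (rule nonneg)
  also have "\<dots> = ip x x - 2 * l * ip x y + l^2 * ip y y"
    by (simp add: sym[of y x] power2_eq_square algebra_simps)
  also have "\<dots> = ip x x - (ip x y)^2 / ip y y"
    using yp by (simp add: l_def power2_eq_square field_simps)
  finally have "(ip x y)^2 / ip y y \<le> ip x x" by simp
  then show ?thesis using yp by (simp add: field_simps)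
qed simp

lemma cs: "\<bar>ip x y\<bar> \<le> ip_norm ip x * ip_norm ip y"
proof -
  have "(ip x y)^2 \<le> (ip_norm ip x * ip_norm ip y)^2"
    using cs_sq by (simp add: power_mult_distrib nsq)
  show ?thesis
  proof (rule power2_le_imp_le)
    show "\<bar>ip x y\<bar>^2 \<le> (ip_norm ip x * ip_norm ip y)^2" using \<open>(ip x y)^2 \<le> _\<close> by simp
    show "0 \<le> ip_norm ip x * ip_norm ip y" using nonneg[of x] nonneg[of y] by (simp add: ip_norm_def)
  qed
qed

lemma angle_iff:
  assumes "x \<noteq> 0" "y \<noteq> 0" "0 \<le> th" "th \<le> pi"
  shows "ip_angle ip x y = th \<longleftrightarrow> ip x y = cos th * ip_norm ip x * ip_norm ip y"
proof -
  define r where "r = ip x y / (ip_norm ip x * ip_norm ip y)"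
  have d: "ip_norm ip x * ip_norm ip y > 0" using npos assms by simp
  have ar: "\<bar>r\<bar> = \<bar>ip x y\<bar> / (ip_norm ip x * ip_norm ip y)"
    using d by (simp add: r_def abs_divide)
  have "\<bar>r\<bar> \<le> 1" unfolding ar using cs[of x y] d by (simp add: pos_divide_le_eq)
  hence r1: "-1 \<le> r" "r \<le> 1" by auto
  have "ip_angle ip x y = th \<longleftrightarrow> arccos r = th"
    unfolding ip_angle_def r_def by (rule refl)
  also have "\<dots> \<longleftrightarrow> r = cos th"
  proof
    assume "arccos r = th"
    hence "cos (arccos r) = cos th" by simp
    thus "r = cos th" using cos_arccos[OF r1] by simp
  next
    assume "r = cos th"
    thus "arccos r = th" using arccos_cos[OF assms(3,4)] by simp
  qed
  also have "\<dots> \<longleftrightarrow> ip x y = cos th * (ip_norm ip x * ip_norm ip y)"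
    using d unfolding r_def by (metis divide_eq_eq less_irrefl)
  also have "\<dots> \<longleftrightarrow> ip x y = cos th * ip_norm ip x * ip_norm ip y"
    by (simp add: mult.assoc)
  finally show ?thesis .
qed

lemma orth_angle:
  assumes "x \<noteq> 0" "y \<noteq> 0"
  shows "ip_angle ip x y = pi/2 \<longleftrightarrow> ip x y = 0"
  using angle_iff[OF assms, of "pi/2"] by simp

end

lemma orth_main:
  assumes i1: "ipl ip1" and i2: "ipl ip2"
    and orth: "\<And>x y. x \<noteq> 0 \<Longrightarrow> y \<noteq> 0 \<Longrightarrow> ip1 x y = 0 \<Longrightarrow> ip2 x y = 0"
    and x0: "x0 \<noteq> 0" "ip1 x0 x0 = ip2 x0 x0"
  shows "ip1 = ip2"
proof -
  interpret a: ipl ip1 by fact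
  interpret b: ipl ip2 by fact
  define k where "k x = ip2 x x / ip1 x x" for x
  have o2: "ip1 z x = 0 \<Longrightarrow> ip2 z x = 0" if "x \<noteq> 0" for x z
    using orth[of z x] that by (cases "z = 0") auto
  have rep: "ip2 y x = ip1 y x * k x" if "x \<noteq> 0" for x y
  proof -
    have p: "ip1 x x > 0" using a.pos that by simp
    define z where "z = y - (ip1 y x / ip1 x x) *\<^sub>R x"
    have "ip1 z x = 0" using p by (simp add: z_def)
    hence "ip2 z x = 0" using o2 that by simp
    hence "ip2 y x = (ip1 y x / ip1 x x) * ip2 x x" by (simp add: z_def)
    then show ?thesis by (simp add: k_def)
  qed
  have keq1: "k x = k y" if "x \<noteq> 0" "y \<noteq> 0" "ip1 x y \<noteq> 0" for x y
  proof -
    have "ip2 y x = ip1 y x * k x" "ip2 x y = ip1 x y * k y" using rep that by auto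
    then show ?thesis using that a.sym[of x y] b.sym[of x y] by simp
  qed
  have keq: "k x = k y" if "x \<noteq> 0" "y \<noteq> 0" for x y
  proof (cases "ip1 x y = 0")
    case True
    have xy: "x + y \<noteq> 0"
    proof
      assume h: "x + y = 0" have "y = (x + y) - x" by simp
      hence "y = - x" using h by simp
      thus False using True a.pos[OF that(1)] by simp
    qed
    have "ip1 x (x + y) \<noteq> 0" using True a.pos[OF that(1)] by simp
    moreover have "ip1 y (x + y) \<noteq> 0" using True a.pos[OF that(2)] a.sym[of x y] by simp
    ultimately show ?thesis using keq1 xy that by metis
  qed (use keq1 that in auto)
  have k1: "k x0 = 1" using x0 a.pos[OF x0(1)] by (simp add: k_def)
  show ?thesis
  proof (intro ext)
    fix y x
    show "ip1 y x = ip2 y x"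
    proof (cases "x = 0")
      case False
      then show ?thesis using rep[OF False, of y] keq[OF False x0(1)] k1 by simp
    qed simp
  qed
qed

lemma case5:
  assumes i1: "ipl ip1" and i2: "ipl ip2"
    and th: "0 < th" "th < pi"
    and H: "\<forall>x y. x \<noteq> 0 \<longrightarrow> y \<noteq> 0 \<longrightarrow> (ip_angle ip1 x y = th \<longrightarrow> ip_angle ip2 x y = th)"
    and x: "x \<noteq> 0" and y: "y \<noteq> 0" and o: "ip1 x y = 0"
  shows "ip2 x y = 0"
proof -
  interpret a: ipl ip1 by fact
  interpret b: ipl ip2 by fact
  define t where "t = cos th"
  define s where "s = sin th"
  have s0: "s > 0" using sin_gt_zero th s_def by simp
  have ts: "t^2 + s^2 = 1" unfolding t_def s_def by (simp add: add.commute)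
  define nx where "nx = ip_norm ip1 x"
  define ny where "ny = ip_norm ip1 y"
  have nx0: "nx > 0" "nx^2 = ip1 x x" using a.npos x a.nsq nx_def by auto
  have ny0: "ny > 0" "ny^2 = ip1 y y" using a.npos y a.nsq ny_def by auto
  define p where "p = t * ny"
  define q where "q = s * nx"
  have q0: "q > 0" using s0 nx0 by (simp add: q_def)
  define A where "A = ip2 x x"
  define B where "B = ip2 x y"
  define D where "D = ip2 y y"
  have A0: "A > 0" using b.pos x A_def by simp
  have eq: "(p * A + sg * q * B)^2 = t^2 * A * (p^2 * A + 2 * sg * p * q * B + sg^2 * q^2 * D)"
    if sg: "sg = 1 \<or> sg = -1" for sg :: real
  proof -
    define w where "w = p *\<^sub>R x + (sg * q) *\<^sub>R y"
    have yx: "ip1 y x = 0" using o a.sym by metis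
    have i1w: "ip1 x w = t * nx * (nx * ny)"
      using o nx0 by (simp add: w_def p_def power2_eq_square)
    have "ip1 w w = p^2 * nx^2 + (sg * q)^2 * ny^2"
      using o yx nx0 ny0 by (simp add: w_def power2_eq_square algebra_simps)
    also have "\<dots> = (nx * ny)^2 * (t^2 + sg^2 * s^2)"
      by (simp add: p_def q_def power_mult_distrib algebra_simps)
    also have "\<dots> = (nx * ny)^2" using sg ts by auto
    finally have ww: "ip1 w w = (nx * ny)^2" .
    have nw: "ip_norm ip1 w = nx * ny"
      unfolding ip_norm_def ww using nx0 ny0 by simp
    have w0: "w \<noteq> 0" using ww nx0 ny0 by auto
    have "ip_angle ip1 x w = th"
      using a.angle_iff[OF x w0, of th] th i1w nw nx_def t_def by simp
    hence "ip_angle ip2 x w = th" using H x w0 by blast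
    hence e: "ip2 x w = t * ip_norm ip2 x * ip_norm ip2 w"
      using b.angle_iff[OF x w0, of th] th t_def by simp
    have "(ip2 x w)^2 = t^2 * A * ip2 w w"
      unfolding e using b.nsq[of x] b.nsq[of w] A_def by (simp add: power_mult_distrib)
    moreover have "ip2 x w = p * A + sg * q * B" by (simp add: w_def A_def B_def)
    moreover have "ip2 w w = p^2 * A + 2 * sg * p * q * B + sg^2 * q^2 * D"
      using b.sym[of y x] by (simp add: w_def A_def B_def D_def power2_eq_square algebra_simps)
    ultimately show ?thesis by simp
  qed
  have e1: "(p * A + q * B)^2 = t^2 * A * (p^2 * A + 2 * p * q * B + q^2 * D)"
    using eq[of 1] by simp
  have e2: "(p * A - q * B)^2 = t^2 * A * (p^2 * A - 2 * p * q * B + q^2 * D)"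
    using eq[of "-1"] by simp
  have "4 * p * q * A * B * (1 - t^2) = ((p * A + q * B)^2 - (p * A - q * B)^2)
      - (t^2 * A * (p^2 * A + 2 * p * q * B + q^2 * D) - t^2 * A * (p^2 * A - 2 * p * q * B + q^2 * D))"
    by algebra
  hence "4 * p * q * A * B * (1 - t^2) = 0" using e1 e2 by simp
  hence "p * B = 0" using q0 A0 ts s0 by auto
  show ?thesis
  proof (cases "p = 0")
    case True
    hence "t = 0" using ny0 by (simp add: p_def)
    hence "(q * B)^2 = 0" using e1 True by simp
    thus ?thesis using q0 B_def by simp
  next
    case False thus ?thesis using \<open>p * B = 0\<close> B_def by simp
  qed
qed

theorem mainTheorem7:
  fixes ip1 ip2 :: "'a::real_vector \<Rightarrow> 'a \<Rightarrow> real"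
  assumes ip1: "is_inner_product ip1"
    and ip2: "is_inner_product ip2"
    and cond:
      "(\<exists>c>0. \<forall>x y. ip2 x y = c * ip1 x y)
       \<or> (\<exists>c>0. \<forall>x. ip_norm ip2 x = c * ip_norm ip1 x)
       \<or> (\<forall>x y. x \<noteq> 0 \<longrightarrow> y \<noteq> 0 \<longrightarrow> ip_angle ip1 x y = ip_angle ip2 x y)
       \<or> (\<forall>x y. x \<noteq> 0 \<longrightarrow> y \<noteq> 0 \<longrightarrow> (ip1 x y = 0 \<longleftrightarrow> ip2 x y = 0))
       \<or> (\<exists>\<theta>0. 0 < \<theta>0 \<and> \<theta>0 < pi \<and>
            (\<forall>x y. x \<noteq> 0 \<longrightarrow> y \<noteq> 0 \<longrightarrow>
               (ip_angle ip1 x y = \<theta>0 \<longleftrightarrow> ip_angle ip2 x y = \<theta>0)))"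
    and eqn: "\<exists>x. x \<noteq> 0 \<and> ip_norm ip1 x = ip_norm ip2 x"
  shows "ip1 = ip2"
proof -
  have i1: "ipl ip1" and i2: "ipl ip2" using ip1 ip2 by (auto intro: ipl.intro)
  interpret a: ipl ip1 by fact
  interpret b: ipl ip2 by fact
  obtain x0 where x0: "x0 \<noteq> 0" "ip_norm ip1 x0 = ip_norm ip2 x0" using eqn by blast
  have x0e: "ip1 x0 x0 = ip2 x0 x0" using arg_cong[OF x0(2), of "\<lambda>t. t^2"] a.nsq[of x0] b.nsq[of x0] by simp
  have orth: "\<And>x y. x \<noteq> 0 \<Longrightarrow> y \<noteq> 0 \<Longrightarrow> ip1 x y = 0 \<Longrightarrow> ip2 x y = 0"
    using cond
  proof (elim disjE)
    assume "\<exists>c>0. \<forall>x y. ip2 x y = c * ip1 x y"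
    then show "\<And>x y. ip1 x y = 0 \<Longrightarrow> ip2 x y = 0" by auto
  next
    assume "\<exists>c>0. \<forall>x. ip_norm ip2 x = c * ip_norm ip1 x"
    then obtain c where c: "\<And>x. ip_norm ip2 x = c * ip_norm ip1 x" by blast
    have sq: "ip2 x x = c^2 * ip1 x x" for x
    proof -
      have "(ip_norm ip2 x)^2 = c^2 * (ip_norm ip1 x)^2" using c[of x] by (simp add: power_mult_distrib)
      thus ?thesis using a.nsq[of x] b.nsq[of x] by simp
    qed
    have "ip2 x y = c^2 * ip1 x y" for x y
    proof -
      have s: "ip2 (x+y) (x+y) = c^2 * ip1 (x+y) (x+y)" by (rule sq)
      have e2: "ip2 (x+y) (x+y) = ip2 x x + 2 * ip2 x y + ip2 y y" using b.sym[of y x] by simp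
      have e1: "ip1 (x+y) (x+y) = ip1 x x + 2 * ip1 x y + ip1 y y" using a.sym[of y x] by simp
      have "ip2 x x + 2 * ip2 x y + ip2 y y = c^2 * ip1 x x + 2 * (c^2 * ip1 x y) + c^2 * ip1 y y"
        using s e1 e2 by (simp add: algebra_simps)
      thus ?thesis using sq[of x] sq[of y] by linarith
    qed
    then show "\<And>x y. ip1 x y = 0 \<Longrightarrow> ip2 x y = 0" by simp
  next
    assume h: "\<forall>x y. x \<noteq> 0 \<longrightarrow> y \<noteq> 0 \<longrightarrow> ip_angle ip1 x y = ip_angle ip2 x y"
    show "\<And>x y. x \<noteq> 0 \<Longrightarrow> y \<noteq> 0 \<Longrightarrow> ip1 x y = 0 \<Longrightarrow> ip2 x y = 0"
    proof -
      fix x y assume xy: "x \<noteq> 0" "y \<noteq> 0" "ip1 x y = 0"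
      have "ip_angle ip1 x y = pi/2" using a.orth_angle[OF xy(1,2)] xy(3) by simp
      hence "ip_angle ip2 x y = pi/2" using h xy by simp
      thus "ip2 x y = 0" using b.orth_angle[OF xy(1,2)] by simp
    qed
  next
    assume "\<forall>x y. x \<noteq> 0 \<longrightarrow> y \<noteq> 0 \<longrightarrow> (ip1 x y = 0 \<longleftrightarrow> ip2 x y = 0)"
    then show "\<And>x y. x \<noteq> 0 \<Longrightarrow> y \<noteq> 0 \<Longrightarrow> ip1 x y = 0 \<Longrightarrow> ip2 x y = 0" by blast
  next
    assume "\<exists>\<theta>0. 0 < \<theta>0 \<and> \<theta>0 < pi \<and>
            (\<forall>x y. x \<noteq> 0 \<longrightarrow> y \<noteq> 0 \<longrightarrow>
               (ip_angle ip1 x y = \<theta>0 \<longleftrightarrow> ip_angle ip2 x y = \<theta>0))"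
    then obtain th where th: "0 < th" "th < pi" and
      H: "\<forall>x y. x \<noteq> 0 \<longrightarrow> y \<noteq> 0 \<longrightarrow> (ip_angle ip1 x y = th \<longrightarrow> ip_angle ip2 x y = th)"
      by blast
    show "\<And>x y. x \<noteq> 0 \<Longrightarrow> y \<noteq> 0 \<Longrightarrow> ip1 x y = 0 \<Longrightarrow> ip2 x y = 0"
      using case5[OF i1 i2 th H] by blast
  qed
  show ?thesis by (rule orth_main[OF i1 i2 orth x0(1) x0e])
qed

end
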